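(* Let $N\ge2$ and $(b,a)\in\mathcal{M}=\mathbb{R}^N\times\mathbb{R}_{>0}^N$. Then for all $1\le j\le 2N$, $\lambda_j(S(b,a))=-\lambda_{2N+1-j}(b,a)$. If $N$ is even, then for all $1\le j\le N$, $\lambda_j^+(S(b,a))=-\lambda^+_{N+1-j}(b,a)$ and $\lambda_j^-(S(b,a))=-\lambda^-_{N+1-j}(b,a)$; if $N$ is odd, then for all $1\le j\le N$, $\lambda_j^+(S(b,a))=-\lambda^-_{N+1-j}(b,a)$ and $\lambda_j^-(S(b,a))=-\lambda^+_{N+1-j}(b,a)$. Moreover, for all $1\le k\le N-1$, $\gamma_k(S(b,a))=\gamma_{N-k}(b,a)$.
   Context: Indices of $(b,a)$ are mod $N$; $S(b,a)=(b',a')$ with $b'_j=-b_{N-j}$, $a'_j=a_{N-j-1}$. $L^\pm(b,a)$ is the $N\times N$ symmetric matrix with diagonal $b_1,\dots,b_N$, entries $(n,n+1),(n+1,n)$ equal to $a_n$ ($1\le n\le N-1$), and entries $(1,N),(N,1)$ equal to $\pm a_N$. $\lambda^\pm_1\le\dots\le\lambda^\pm_N$ are the eigenvalues of $L^\pm(b,a)$ in increasing order with multiplicity, and $\lambda_1\le\dots\le\lambda_{2N}$ are all eigenvalues of $L^+$ and $L^-$ together, in increasing order with multiplicity (these satisfy $\lambda_1<\lambda_2\le\lambda_3<\dots\le\lambda_{2N-1}<\lambda_{2N}$). The $k$-th gap length is $\gamma_k=\lambda_{2k+1}-\lambda_{2k}$. *)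

theory Defs
  imports "Jordan_Normal_Form.Char_Poly" "HOL-Computational_Algebra.Polynomial" "HOL-Library.Multiset"
begin

text \<open>A point (b,a) is a pair of functions nat => real; only the values at indices
1..N are relevant. Indices are read mod N with representatives in 1..N.\<close>

definition cyc :: "nat \<Rightarrow> int \<Rightarrow> nat" where
  "cyc N k = nat ((k - 1) mod int N + 1)"

definition S_map :: "nat \<Rightarrow> (nat \<Rightarrow> real) \<times> (nat \<Rightarrow> real) \<Rightarrow> (nat \<Rightarrow> real) \<times> (nat \<Rightarrow> real)" where
  "S_map N ba = (\<lambda>j. - fst ba (cyc N (int N - int j)), \<lambda>j. snd ba (cyc N (int N - int j - 1)))"

text \<open>L^{+-}(b,a), with s = 1 or s = -1. Matrix row/column index i (0-based) corresponds
to index i+1 of the paper. The entries (n,n+1),(n+1,n) contribute a_n for 1 <= n <= N-1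
and the corner entries (1,N),(N,1) contribute s*a_N; contributions are added
(this only matters when N = 2).\<close>
definition Lmat :: "nat \<Rightarrow> real \<Rightarrow> (nat \<Rightarrow> real) \<times> (nat \<Rightarrow> real) \<Rightarrow> real mat" where
  "Lmat N s ba = mat N N (\<lambda>(i,k).
      (if i = k then fst ba (i+1) else 0)
    + (if k = i + 1 then snd ba (i+1) else 0)
    + (if i = k + 1 then snd ba (k+1) else 0)
    + (if (i = 0 \<and> k = N - 1) \<or> (i = N - 1 \<and> k = 0) then s * snd ba N else 0))"

text \<open>Eigenvalues (with multiplicity) of a real matrix, in increasing order, as a list
(for a real symmetric matrix these are all roots of the characteristic polynomial).\<close>
definition eigs :: "real mat \<Rightarrow> real list" where
  "eigs M = sorted_list_of_multiset (proots (char_poly M))"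

definition lam_plus :: "nat \<Rightarrow> (nat \<Rightarrow> real) \<times> (nat \<Rightarrow> real) \<Rightarrow> nat \<Rightarrow> real" where
  "lam_plus N ba j = eigs (Lmat N 1 ba) ! (j - 1)"

definition lam_minus :: "nat \<Rightarrow> (nat \<Rightarrow> real) \<times> (nat \<Rightarrow> real) \<Rightarrow> nat \<Rightarrow> real" where
  "lam_minus N ba j = eigs (Lmat N (-1) ba) ! (j - 1)"

definition lam :: "nat \<Rightarrow> (nat \<Rightarrow> real) \<times> (nat \<Rightarrow> real) \<Rightarrow> nat \<Rightarrow> real" where
  "lam N ba j = sorted_list_of_multiset
      (proots (char_poly (Lmat N 1 ba)) + proots (char_poly (Lmat N (-1) ba))) ! (j - 1)"

definition gap :: "nat \<Rightarrow> (nat \<Rightarrow> real) \<times> (nat \<Rightarrow> real) \<Rightarrow> nat \<Rightarrow> real" where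
  "gap N ba k = lam N ba (2*k+1) - lam N ba (2*k)"

end

theory Submission
  imports Defs
begin


lemma cyc_in: "1 \<le> k \<Longrightarrow> k \<le> int N \<Longrightarrow> cyc N k = nat k"
  unfolding cyc_def by (simp add: mod_pos_pos_trivial)
lemma cyc_0: "N > 0 \<Longrightarrow> cyc N 0 = N"
  unfolding cyc_def by (simp add: zmod_minus1)
lemma cyc_m1: "N \<ge> 2 \<Longrightarrow> cyc N (-1) = N - 1"
proof -
  assume N: "N \<ge> 2"
  have "(-2::int) mod int N = (-2 + int N) mod int N" by simp
  also have "\<dots> = int N - 2" using N by (subst mod_pos_pos_trivial) auto
  finally have "(-2::int) mod int N = int N - 2" .
  thus ?thesis unfolding cyc_def using N by simp
qed

lemma Sb: "N \<ge> 2 \<Longrightarrow> i < N \<Longrightarrow> fst (S_map N (b,a)) (i+1) = - b (if i = N-1 then N else N-1-i)"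
proof -
  assume N: "N \<ge> 2" "i < N"
  show ?thesis
  proof (cases "i = N-1")
    case True thus ?thesis unfolding S_map_def using N cyc_0[of N] by (simp add: of_nat_diff)
  next
    case False
    then have "cyc N (int N - int (i+1)) = N - 1 - i" using N cyc_in[of "int N - int (i+1)" N] by auto
    thus ?thesis unfolding S_map_def using False by simp
  qed
qed

lemma Sa: "N \<ge> 2 \<Longrightarrow> i < N \<Longrightarrow> snd (S_map N (b,a)) (i+1) = a (if i = N-1 then N-1 else if i = N-2 then N else N-2-i)"
proof -
  assume N: "N \<ge> 2" "i < N"
  show ?thesis
  proof (cases "i = N-1")
    case True 
    then have "int N - int (i+1) - 1 = -1" using N by auto
    thus ?thesis unfolding S_map_def using N cyc_m1[of N] True by simp
  next
    case F1: False
    show ?thesis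
    proof (cases "i = N-2")
      case True
      then have "int N - int (i+1) - 1 = 0" using N by auto
      thus ?thesis unfolding S_map_def using N cyc_0[of N] True F1 by simp
    next
      case False
      then have "cyc N (int N - int (i+1) - 1) = N - 2 - i" using N F1 cyc_in[of "int N - int (i+1) - 1" N] by auto
      thus ?thesis unfolding S_map_def using False F1 by simp
    qed
  qed
qed

lemma SaN: "N \<ge> 2 \<Longrightarrow> snd (S_map N (b,a)) N = a (N-1)"
  using Sa[of N "N-1" b a] by simp




lemma sum_delta_if: "(c::nat) < n \<Longrightarrow> (\<Sum>j\<in>{0..<n}. (if j = c then f j else 0)) = (f c :: 'a::comm_monoid_add)"
proof -
  assume c: "c < n"
  have "(\<Sum>j\<in>{0..<n}. (if j = c then f j else 0)) = (\<Sum>j\<in>{0..<n}. (if j = c then f c else 0))"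
    by (rule sum.cong) auto
  also have "\<dots> = f c" using c by simp
  finally show ?thesis .
qed

lemma if0_mult: "(if c then x else 0) * (y::'a::semiring_0) = (if c then x * y else 0)"
  "y * (if c then x else 0) = (if c then y * x else 0)" by auto

lemma signed_perm_similar:
  fixes B :: "'a::comm_ring_1 mat"
  assumes B: "B \<in> carrier_mat n n"
    and sig: "\<And>i. i < n \<Longrightarrow> \<sigma> i < n" "\<And>i. i < n \<Longrightarrow> \<sigma> (\<sigma> i) = i"
    and eps: "\<And>i. i < n \<Longrightarrow> \<epsilon> i * \<epsilon> i = 1"
  shows "similar_mat (mat n n (\<lambda>(i,k). \<epsilon> i * \<epsilon> k * B $$ (\<sigma> i, \<sigma> k))) B"
proof -
  define P where "P = mat n n (\<lambda>(i,j). if j = \<sigma> i then \<epsilon> i else 0)"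
  define Q where "Q = mat n n (\<lambda>(i,j). if i = \<sigma> j then \<epsilon> j else 0)"
  have inj: "\<And>i k. i < n \<Longrightarrow> k < n \<Longrightarrow> \<sigma> i = \<sigma> k \<longleftrightarrow> i = k" using sig by metis
  have PQ: "P * Q = 1\<^sub>m n"
  proof (rule eq_matI)
    fix i k assume ik: "i < dim_row (1\<^sub>m n :: 'a mat)" "k < dim_col (1\<^sub>m n :: 'a mat)"
    then have "(P * Q) $$ (i,k) = (\<Sum>j\<in>{0..<n}. (if j = \<sigma> i then \<epsilon> i * (if j = \<sigma> k then \<epsilon> k else 0) else 0))"
      by (auto simp: P_def Q_def scalar_prod_def if0_mult intro!: sum.cong)
    also have "\<dots> = (if \<sigma> i = \<sigma> k then \<epsilon> i * \<epsilon> k else 0)"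
      using ik sig by (subst sum_delta_if) auto
    also have "\<dots> = 1\<^sub>m n $$ (i,k)" using ik inj eps by auto
    finally show "(P * Q) $$ (i,k) = 1\<^sub>m n $$ (i,k)" .
  qed (auto simp: P_def Q_def)
  have QP: "Q * P = 1\<^sub>m n"
  proof (rule eq_matI)
    fix i k assume ik: "i < dim_row (1\<^sub>m n :: 'a mat)" "k < dim_col (1\<^sub>m n :: 'a mat)"
    have "(Q * P) $$ (i,k) = (\<Sum>j\<in>{0..<n}. Q $$ (i,j) * P $$ (j,k))"
      using ik by (auto simp: P_def Q_def scalar_prod_def)
    also have "\<dots> = (\<Sum>j\<in>{0..<n}. (if j = \<sigma> i then \<epsilon> j * (if k = \<sigma> j then \<epsilon> j else 0) else 0))"
    proof (rule sum.cong)
      fix j assume j: "j \<in> {0..<n}"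
      show "Q $$ (i,j) * P $$ (j,k) = (if j = \<sigma> i then \<epsilon> j * (if k = \<sigma> j then \<epsilon> j else 0) else 0)"
        using j ik sig by (cases "j = \<sigma> i") (auto simp: P_def Q_def)
    qed simp
    also have "\<dots> = (if k = \<sigma> (\<sigma> i) then \<epsilon> (\<sigma> i) * \<epsilon> (\<sigma> i) else 0)"
      using ik sig by (subst sum_delta_if) auto
    also have "\<dots> = 1\<^sub>m n $$ (i,k)" using ik sig eps by auto
    finally show "(Q * P) $$ (i,k) = 1\<^sub>m n $$ (i,k)" .
  qed (auto simp: P_def Q_def)
  have PB: "P * B = mat n n (\<lambda>(i,j). \<epsilon> i * B $$ (\<sigma> i, j))"
  proof (rule eq_matI)
    fix i k assume ik: "i < dim_row (mat n n (\<lambda>(i,j). \<epsilon> i * B $$ (\<sigma> i, j)))" "k < dim_col (mat n n (\<lambda>(i,j). \<epsilon> i * B $$ (\<sigma> i, j)))"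
    then have "(P * B) $$ (i,k) = (\<Sum>j\<in>{0..<n}. (if j = \<sigma> i then \<epsilon> i * B $$ (j, k) else 0))"
      using B by (auto simp: P_def scalar_prod_def if0_mult intro!: sum.cong)
    also have "\<dots> = \<epsilon> i * B $$ (\<sigma> i, k)"
      using ik sig by (subst sum_delta_if) auto
    finally show "(P * B) $$ (i,k) = mat n n (\<lambda>(i,j). \<epsilon> i * B $$ (\<sigma> i, j)) $$ (i,k)" using ik by simp
  qed (use B in \<open>auto simp: P_def\<close>)
  have PBQ: "P * B * Q = mat n n (\<lambda>(i,k). \<epsilon> i * \<epsilon> k * B $$ (\<sigma> i, \<sigma> k))"
  proof (rule eq_matI)
    fix i k assume ik: "i < dim_row (mat n n (\<lambda>(i,k). \<epsilon> i * \<epsilon> k * B $$ (\<sigma> i, \<sigma> k)))" "k < dim_col (mat n n (\<lambda>(i,k). \<epsilon> i * \<epsilon> k * B $$ (\<sigma> i, \<sigma> k)))"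
    then have "(P * B * Q) $$ (i,k) = (\<Sum>j\<in>{0..<n}. (if j = \<sigma> k then \<epsilon> i * B $$ (\<sigma> i, j) * \<epsilon> k else 0))"
      unfolding PB by (auto simp: Q_def scalar_prod_def if0_mult intro!: sum.cong)
    also have "\<dots> = \<epsilon> i * B $$ (\<sigma> i, \<sigma> k) * \<epsilon> k"
      using ik sig by (subst sum_delta_if) auto
    finally show "(P * B * Q) $$ (i,k) = mat n n (\<lambda>(i,k). \<epsilon> i * \<epsilon> k * B $$ (\<sigma> i, \<sigma> k)) $$ (i,k)" using ik by (simp add: ac_simps)
  qed (use B in \<open>auto simp: P_def Q_def\<close>)
  show ?thesis unfolding similar_mat_def similar_mat_wit_def
    by (rule exI[of _ P], rule exI[of _ Q]) (use PQ QP PBQ B in \<open>auto simp: P_def Q_def Let_def\<close>)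
qed




definition sig :: "nat \<Rightarrow> nat \<Rightarrow> nat" where
  "sig N i = (if i = N-1 then N-1 else N-2-i)"
definition par :: "nat \<Rightarrow> real" where
  "par i = (if even i then 1 else -1)"
definition eps :: "nat \<Rightarrow> real \<Rightarrow> nat \<Rightarrow> real" where
  "eps N s i = (if i = N-1 then -s else par i)"

lemma par_Suc: "par (Suc i) = - par i" by (simp add: par_def)
lemma par_sq: "par i * par i = 1" by (simp add: par_def)
lemma par_Nm2: "N \<ge> 2 \<Longrightarrow> par (N-2) = (-1)^N"
proof -
  assume "N \<ge> 2" then obtain m where "N = m + 2" by (metis add.commute le_Suc_ex)
  thus ?thesis by (simp add: par_def)
qed

lemma L_S_entry:
  assumes N: "N \<ge> 2" and s: "s = 1 \<or> s = -1" and ik: "i < N" "k < N"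
  shows "Lmat N s (S_map N (b,a)) $$ (i,k) = eps N s i * eps N s k * (- Lmat N ((-1)^N * s) (b,a)) $$ (sig N i, sig N k)"
proof -
  have si: "sig N i < N" "sig N k < N" using N ik by (auto simp: sig_def)
  have ss: "s * s = 1" using s by auto
  have n2: "Suc (N-2) = N - Suc 0" using N by auto
  have L: "Lmat N s (S_map N (b,a)) $$ (i,k) =
      (if i = k then - b (if i = N-1 then N else N-1-i) else 0)
    + (if k = i + 1 then a (if i = N-1 then N-1 else if i = N-2 then N else N-2-i) else 0)
    + (if i = k + 1 then a (if k = N-1 then N-1 else if k = N-2 then N else N-2-k) else 0)
    + (if (i = 0 \<and> k = N - 1) \<or> (i = N - 1 \<and> k = 0) then s * a (N-1) else 0)"
    unfolding Lmat_def index_mat(1)[OF ik] prod.case Sb[OF N ik(1)] Sa[OF N ik(1)] Sa[OF N ik(2)] SaN[OF N] by (simp only: add_ac)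
  have R: "(- Lmat N ((-1)^N * s) (b,a)) $$ (sig N i, sig N k) = - (
      (if sig N i = sig N k then b (sig N i + 1) else 0)
    + (if sig N k = sig N i + 1 then a (sig N i+1) else 0)
    + (if sig N i = sig N k + 1 then a (sig N k+1) else 0)
    + (if (sig N i = 0 \<and> sig N k = N - 1) \<or> (sig N i = N - 1 \<and> sig N k = 0) then (-1)^N * s * a N else 0))"
  proof -
    have c: "Lmat N ((-1)^N * s) (b,a) \<in> carrier_mat N N" unfolding Lmat_def by simp
    have u: "(- Lmat N ((-1)^N * s) (b,a)) $$ (sig N i, sig N k) = - (Lmat N ((-1)^N * s) (b,a) $$ (sig N i, sig N k))"
      using c si by simp
    show ?thesis unfolding u
      unfolding Lmat_def index_mat(1)[OF si] prod.case fst_conv snd_conv by (simp only: add_ac)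
  qed
  show ?thesis
  proof (cases "i = N-1")
    case Ti: True
    show ?thesis
    proof (cases "k = N-1")
      case True
      then show ?thesis unfolding L R using Ti N ss by (auto simp: sig_def eps_def)
    next
      case False
      have sk: "sig N k = N-2-k" "eps N s k = par k" using False by (auto simp: sig_def eps_def)
      have si': "sig N i = N-1" "eps N s i = -s" using Ti by (auto simp: sig_def eps_def)
      have e1: "(N - 1 = N - 2 - k + 1) = (k = 0)" using N ik False by auto
      have e2: "(N - 2 - k = 0) = (k = N-2)" using N ik False by auto
      have e3: "(N - 2 - k = N - 1) = False" using N by auto
      have e4: "(N - 2 - k = N - 1 + 1) = False" using N by auto
      have e5: "(N - 1 = k + 1) = (k = N-2)" using N by auto
      show ?thesis unfolding L R unfolding sk si' e1 e2 e3 e4 e5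
        using N ik False ss par_Nm2[OF N] Ti n2
        by (cases "k = 0"; cases "k = N-2") (auto simp: par_def algebra_simps)
    qed
  next
    case Fi: False
    show ?thesis
    proof (cases "k = N-1")
      case Tk: True
      have si': "sig N i = N-2-i" "eps N s i = par i" using Fi by (auto simp: sig_def eps_def)
      have sk: "sig N k = N-1" "eps N s k = -s" using Tk by (auto simp: sig_def eps_def)
      have e1: "(N - 1 = N - 2 - i + 1) = (i = 0)" using N ik Fi by auto
      have e2: "(N - 2 - i = 0) = (i = N-2)" using N ik Fi by auto
      have e3: "(N - 2 - i = N - 1) = False" using N by auto
      have e4: "(N - 2 - i = N - 1 + 1) = False" using N by auto
      have e5: "(N - 1 = i + 1) = (i = N-2)" using N by auto
      show ?thesis unfolding L R unfolding sk si' e1 e2 e3 e4 e5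
        using N ik Fi ss par_Nm2[OF N] Tk n2
        by (cases "i = 0"; cases "i = N-2") (auto simp: par_def algebra_simps)
    next
      case Fk: False
      have si': "sig N i = N-2-i" "eps N s i = par i" using Fi by (auto simp: sig_def eps_def)
      have sk: "sig N k = N-2-k" "eps N s k = par k" using Fk by (auto simp: sig_def eps_def)
      have i1: "i \<le> N-2" "k \<le> N-2" using Fi Fk ik by auto
      have e1: "(N - 2 - i = N - 2 - k) = (i = k)" using i1 by auto
      have e2: "(N - 2 - k = N - 2 - i + 1) = (i = k + 1)" using i1 by auto
      have e3: "(N - 2 - i = N - 2 - k + 1) = (k = i + 1)" using i1 by auto
      have e4: "(N - 2 - i = N - 1) = False" "(N - 2 - k = N - 1) = False" using N by auto
      have e5: "(i = N - 1) = False" "(k = N - 1) = False" using Fi Fk by auto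
      have e6: "(k = i + 1) \<Longrightarrow> i \<noteq> N - 2" using i1 Fk by auto
      have e7: "(i = k + 1) \<Longrightarrow> k \<noteq> N - 2" using i1 Fi by auto
      have e8: "N - 2 - i + 1 = N - 1 - i" using i1 N by auto
      note U = sk si' e1 e2 e3 e4 e5 e8
      show ?thesis
      proof (cases "i = k")
        case True thus ?thesis unfolding L R unfolding U using i1 N by (auto simp: par_sq)
      next
        case F1: False
        show ?thesis
        proof (cases "k = i + 1")
          case True
          have "N - 2 - k + 1 = N - 2 - i" using True i1 by auto
          thus ?thesis unfolding L R unfolding U using True e6 i1 by (auto simp: par_def)
        next
          case F2: False
          show ?thesis
          proof (cases "i = k + 1")
            case True
            have "N - 2 - i + 1 = N - 2 - k" using True i1 by auto
            thus ?thesis unfolding L R unfolding U using True e7 F1 F2 i1 by (auto simp: par_def)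
          next
            case False
            thus ?thesis unfolding L R unfolding U using F1 F2 i1 by auto
          qed
        qed
      qed
    qed
  qed
qed





lemma sym_eig_real:
  fixes A :: "real mat" and z :: complex
  assumes A: "A \<in> carrier_mat n n" and sym: "\<And>i k. i<n \<Longrightarrow> k<n \<Longrightarrow> A$$(i,k) = A$$(k,i)"
  and ev: "eigenvalue (map_mat complex_of_real A) z"
  shows "z \<in> \<real>"
proof -
  let ?C = "map_mat complex_of_real A"
  obtain v where v: "v \<in> carrier_vec n" "v \<noteq> 0\<^sub>v n" "?C *\<^sub>v v = z \<cdot>\<^sub>v v"
    using ev A unfolding eigenvalue_def eigenvector_def by auto
  have comp: "(\<Sum>k<n. of_real (A$$(i,k)) * v$k) = z * v$i" if i: "i < n" for i
  proof -
    have "(?C *\<^sub>v v) $ i = (z \<cdot>\<^sub>v v) $ i" using v(3) by simp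
    then show ?thesis using i A v(1) by (auto simp: scalar_prod_def lessThan_atLeast0)
  qed
  define Q where "Q = (\<Sum>i<n. cnj (v$i) * (\<Sum>k<n. of_real (A$$(i,k)) * v$k))"
  define r where "r = (\<Sum>i<n. (cmod (v$i))^2)"
  have Qz: "Q = z * of_real r"
  proof -
    have "Q = (\<Sum>i<n. z * (cnj (v$i) * v$i))" unfolding Q_def
      by (rule sum.cong) (auto simp: comp)
    also have "\<dots> = z * (\<Sum>i<n. of_real ((cmod (v$i))^2))"
      unfolding sum_distrib_left by (intro sum.cong refl) (metis complex_norm_square mult.commute)
    finally show ?thesis unfolding r_def by simp
  qed
  have Qr: "cnj Q = Q"
  proof -
    have "cnj Q = (\<Sum>i<n. \<Sum>k<n. v$i * (of_real (A$$(i,k)) * cnj (v$k)))"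
      unfolding Q_def by (simp add: sum_distrib_left)
    also have "\<dots> = (\<Sum>k<n. \<Sum>i<n. v$i * (of_real (A$$(i,k)) * cnj (v$k)))"
      by (rule sum.swap)
    also have "\<dots> = Q" unfolding Q_def sum_distrib_left
      by (intro sum.cong refl) (auto simp: sym mult_ac)
    finally show ?thesis .
  qed
  have rpos: "r > 0"
  proof -
    obtain i where i: "i < n" "v $ i \<noteq> 0" using v(1,2) by (metis carrier_vecD eq_vecI index_zero_vec(1,2))
    have "(cmod (v$i))^2 \<le> r" unfolding r_def
      by (rule member_le_sum) (use i in auto)
    moreover have "(cmod (v$i))^2 > 0" using i by simp
    ultimately show ?thesis by linarith
  qed
  have "cnj z * of_real r = z * of_real r" using Qr Qz by (metis complex_cnj_complex_of_real complex_cnj_mult)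
  then have "cnj z = z" using rpos by simp
  thus ?thesis using Reals_cnj_iff by blast
qed

lemma poly_linprod: "poly (\<Prod>a\<leftarrow>as. [:-a,1:]) (x::'a::comm_ring_1) = (\<Prod>a\<leftarrow>as. (x - a))"
proof (induction as)
  case (Cons a as)
  have "poly [:-a,1:] x = x - a" by simp
  then show ?case using Cons by (simp add: left_diff_distrib)
qed simp

lemma proots_linprod: "proots (\<Prod>a\<leftarrow>as. [:-a,1::'a::idom:]) = mset as"
proof (induction as)
  case (Cons a as)
  have "(\<Prod>a\<leftarrow>as. [:-a,1::'a:]) \<noteq> 0" by (auto simp: prod_list_zero_iff)
  then have "proots ([:-a,1::'a:] * (\<Prod>a\<leftarrow>as. [:-a,1::'a:])) = proots [:-a,1::'a:] + proots (\<Prod>a\<leftarrow>as. [:-a,1::'a:])"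
    by (intro proots_mult) auto
  then show ?case using Cons by (simp del: mult_pCons_left)
qed simp

lemma sym_char_poly_split:
  fixes A :: "real mat"
  assumes A: "A \<in> carrier_mat n n" and sym: "\<And>i k. i<n \<Longrightarrow> k<n \<Longrightarrow> A$$(i,k) = A$$(k,i)"
  shows "\<exists>as. char_poly A = (\<Prod>a\<leftarrow>as. [:-a,1:]) \<and> length as = n"
proof -
  let ?C = "map_mat complex_of_real A"
  have C: "?C \<in> carrier_mat n n" using A by auto
  obtain cs where cs: "char_poly ?C = (\<Prod>c\<leftarrow>cs. [:-c,1:])" "length cs = n"
    using char_poly_factorized[OF C] by blast
  have hom: "char_poly ?C = map_poly of_real (char_poly A)" using of_real_hom.char_poly_hom[OF A] by simp
  have real: "c \<in> \<real>" if c: "c \<in> set cs" for c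
  proof -
    have "poly (char_poly ?C) c = 0" unfolding cs poly_linprod using c
      by (simp add: prod_list_zero_iff)
    then have "eigenvalue ?C c" using eigenvalue_root_char_poly[OF C] by simp
    thus ?thesis using sym_eig_real[OF A sym] by blast
  qed
  define as where "as = map Re cs"
  have "poly (char_poly A) = poly (\<Prod>a\<leftarrow>as. [:-a,1:])"
  proof
    fix x :: real
    have "complex_of_real (poly (char_poly A) x) = poly (char_poly ?C) (of_real x)"
      unfolding hom by simp
    also have "\<dots> = (\<Prod>c\<leftarrow>cs. (of_real x - c))" unfolding cs poly_linprod ..
    also have "\<dots> = (\<Prod>c\<leftarrow>cs. of_real (x - Re c))"
      by (rule arg_cong[where f=prod_list], rule map_cong[OF refl]) (use real in \<open>auto simp: complex_is_Real_iff complex_eq_iff\<close>)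
    also have "\<dots> = of_real (\<Prod>a\<leftarrow>as. (x - a))" unfolding as_def
      by (induction cs) auto
    finally show "poly (char_poly A) x = poly (\<Prod>a\<leftarrow>as. [:-a,1:]) x" unfolding poly_linprod
      using of_real_eq_iff by blast
  qed
  then have "char_poly A = (\<Prod>a\<leftarrow>as. [:-a,1:])" using poly_eq_poly_eq_iff by blast
  thus ?thesis using cs(2) unfolding as_def by (intro exI[of _ "map Re cs"]) auto
qed


lemma char_poly_neg:
  fixes A :: "real mat"
  assumes A: "A \<in> carrier_mat n n"
  shows "poly (char_poly (-A)) x = (-1)^n * poly (char_poly A) (-x)"
proof -
  have mA: "-A \<in> carrier_mat n n" using A by simp
  have e1: "- char_matrix (-A) x = char_matrix A (-x)"
    by (rule eq_matI) (use A in \<open>auto simp: char_matrix_def\<close>)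
  have e2: "- char_matrix A (-x) = (-1) \<cdot>\<^sub>m char_matrix A (-x)"
    by (rule eq_matI) (use A in \<open>auto simp: char_matrix_def\<close>)
  have cm: "char_matrix A (-x) \<in> carrier_mat n n" using A by simp
  have "poly (char_poly (-A)) x = det (char_matrix A (-x))"
    unfolding char_poly_matrix[OF mA] e1 ..
  moreover have "poly (char_poly A) (-x) = (-1)^n * det (char_matrix A (-x))"
    unfolding char_poly_matrix[OF A] e2 using cm by simp
  ultimately show ?thesis by (simp add: power_mult_distrib[symmetric])
qed

lemma neg_prod_aux: "(-1)^length as * (\<Prod>a\<leftarrow>as. (- x - a)) = (\<Prod>a\<leftarrow>map uminus as. ((x::real) - a))"
  by (induction as) (auto simp: algebra_simps)

lemma char_poly_neg_split:
  fixes A :: "real mat"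
  assumes A: "A \<in> carrier_mat n n" and cp: "char_poly A = (\<Prod>a\<leftarrow>as. [:-a,1:])" and l: "length as = n"
  shows "char_poly (-A) = (\<Prod>a\<leftarrow>map uminus as. [:-a,1:])"
proof -
  have "poly (char_poly (-A)) = poly (\<Prod>a\<leftarrow>map uminus as. [:-a,1:])"
  proof
    fix x
    show "poly (char_poly (-A)) x = poly (\<Prod>a\<leftarrow>map uminus as. [:-a,1:]) x"
      unfolding char_poly_neg[OF A] cp poly_linprod l[symmetric] neg_prod_aux ..
  qed
  thus ?thesis using poly_eq_poly_eq_iff by blast
qed

lemma sorted_neg: "sorted_list_of_multiset (image_mset uminus M) = rev (map uminus (sorted_list_of_multiset (M :: real multiset)))"
proof -
  define l where "l = sorted_list_of_multiset M"
  have M: "M = mset l" unfolding l_def by simp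
  have sl: "sorted l" unfolding l_def by simp
  have "sort (map uminus l) = rev (map uminus l)"
  proof (rule properties_for_sort)
    show "sorted (rev (map uminus l))" using sl
      unfolding sorted_wrt_rev sorted_wrt_map
      by (rule sorted_wrt_mono_rel[rotated]) auto
  qed simp
  moreover have "image_mset uminus M = mset (map uminus l)" unfolding M by simp
  ultimately have "sorted_list_of_multiset (image_mset uminus M) = rev (map uminus l)"
    by (simp only: sorted_list_of_multiset_mset)
  thus ?thesis unfolding l_def .
qed




lemma Lmat_carrier: "Lmat N s ba \<in> carrier_mat N N" unfolding Lmat_def by simp

lemma Lmat_sym: "i < N \<Longrightarrow> k < N \<Longrightarrow> Lmat N s ba $$ (i,k) = Lmat N s ba $$ (k,i)"
  unfolding Lmat_def by (auto simp: add_ac)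

lemma Lmat_split: "\<exists>as. char_poly (Lmat N s ba) = (\<Prod>a\<leftarrow>as. [:-a,1:]) \<and> length as = N"
  by (rule sym_char_poly_split[OF Lmat_carrier Lmat_sym])

lemma size_roots: "size (proots (char_poly (Lmat N s ba))) = N"
proof -
  obtain as where "char_poly (Lmat N s ba) = (\<Prod>a\<leftarrow>as. [:-a,1:])" "length as = N"
    using Lmat_split[of N s ba] by blast
  thus ?thesis by (simp add: proots_linprod)
qed

lemma roots_S:
  assumes N: "N \<ge> 2" and s: "s = 1 \<or> s = -1"
  shows "proots (char_poly (Lmat N s (S_map N (b,a)))) = image_mset uminus (proots (char_poly (Lmat N ((-1)^N*s) (b,a))))"
proof -
  let ?B = "- Lmat N ((-1)^N*s) (b,a)"
  have B: "?B \<in> carrier_mat N N" using Lmat_carrier by simp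
  have eq: "Lmat N s (S_map N (b,a)) = mat N N (\<lambda>(i,k). eps N s i * eps N s k * ?B $$ (sig N i, sig N k))"
  proof (rule eq_matI)
    fix i k assume ik: "i < dim_row (mat N N (\<lambda>(i,k). eps N s i * eps N s k * ?B $$ (sig N i, sig N k)))"
      "k < dim_col (mat N N (\<lambda>(i,k). eps N s i * eps N s k * ?B $$ (sig N i, sig N k)))"
    then have ik': "i < N" "k < N" by auto
    show "Lmat N s (S_map N (b,a)) $$ (i,k) = mat N N (\<lambda>(i,k). eps N s i * eps N s k * ?B $$ (sig N i, sig N k)) $$ (i,k)"
      unfolding index_mat(1)[OF ik'] prod.case by (rule L_S_entry[OF N s ik'])
  qed (use Lmat_carrier[of N s "S_map N (b,a)"] in auto)
  have "similar_mat (mat N N (\<lambda>(i,k). eps N s i * eps N s k * ?B $$ (sig N i, sig N k))) ?B"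
    by (rule signed_perm_similar[OF B]) (use N s in \<open>auto simp: sig_def eps_def par_def\<close>)
  then have cp: "char_poly (Lmat N s (S_map N (b,a))) = char_poly ?B"
    unfolding eq by (rule char_poly_similar)
  obtain as where as: "char_poly (Lmat N ((-1)^N*s) (b,a)) = (\<Prod>a\<leftarrow>as. [:-a,1:])" "length as = N"
    using Lmat_split by blast
  show ?thesis unfolding cp char_poly_neg_split[OF Lmat_carrier as] as(1) proots_linprod by simp
qed

lemma idx_neg:
  assumes "size X = m" "1 \<le> j" "j \<le> m"
  shows "sorted_list_of_multiset (image_mset uminus X) ! (j-1) = - (sorted_list_of_multiset (X::real multiset) ! (m - j))"
proof -
  have l: "length (sorted_list_of_multiset X) = m" using assms(1)
    by (metis mset_sorted_list_of_multiset size_mset)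
  show ?thesis unfolding sorted_neg using assms l
    by (simp add: rev_nth Suc_diff_Suc)
qed




theorem lemma2p3:
  fixes N :: nat and b a :: "nat \<Rightarrow> real"
  assumes "N \<ge> 2"
    and "\<forall>n\<in>{1..N}. a n > 0"
  shows "(\<forall>j\<in>{1..2*N}. lam N (S_map N (b, a)) j = - lam N (b, a) (2*N + 1 - j))
    \<and> (even N \<longrightarrow> (\<forall>j\<in>{1..N}. lam_plus N (S_map N (b, a)) j = - lam_plus N (b, a) (N + 1 - j)
                          \<and> lam_minus N (S_map N (b, a)) j = - lam_minus N (b, a) (N + 1 - j)))
    \<and> (odd N \<longrightarrow> (\<forall>j\<in>{1..N}. lam_plus N (S_map N (b, a)) j = - lam_minus N (b, a) (N + 1 - j)
                          \<and> lam_minus N (S_map N (b, a)) j = - lam_plus N (b, a) (N + 1 - j)))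
    \<and> (\<forall>k\<in>{1..N-1}. gap N (S_map N (b, a)) k = gap N (b, a) (N - k))"
proof -
  have N: "N \<ge> 2" using assms(1) .
  define P where "P = proots (char_poly (Lmat N 1 (b,a)))"
  define M where "M = proots (char_poly (Lmat N (-1) (b,a)))"
  define PS where "PS = proots (char_poly (Lmat N 1 (S_map N (b,a))))"
  define MS where "MS = proots (char_poly (Lmat N (-1) (S_map N (b,a))))"
  have sP: "size P = N" "size M = N" unfolding P_def M_def by (rule size_roots)+
  have PS1: "PS = image_mset uminus (proots (char_poly (Lmat N ((-1)^N*1) (b,a))))"
    unfolding PS_def by (rule roots_S[OF N]) simp
  have MS1: "MS = image_mset uminus (proots (char_poly (Lmat N ((-1)^N*(-1)) (b,a))))"
    unfolding MS_def by (rule roots_S[OF N]) simp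
  have ev: "even N \<Longrightarrow> PS = image_mset uminus P \<and> MS = image_mset uminus M"
    using PS1 MS1 unfolding P_def M_def by simp
  have od: "odd N \<Longrightarrow> PS = image_mset uminus M \<and> MS = image_mset uminus P"
    using PS1 MS1 unfolding P_def M_def by simp
  have sum: "PS + MS = image_mset uminus (P + M)"
    using ev od by (cases "even N") (auto simp: add.commute)
  have lamS: "lam N (S_map N (b, a)) j = - lam N (b, a) (2*N + 1 - j)" if j: "j \<in> {1..2*N}" for j
  proof -
    have "lam N (S_map N (b, a)) j = sorted_list_of_multiset (image_mset uminus (P + M)) ! (j-1)"
      unfolding lam_def sum[symmetric] PS_def MS_def ..
    also have "\<dots> = - (sorted_list_of_multiset (P+M) ! (2*N - j))"
      by (rule idx_neg) (use j sP in auto)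
    also have "\<dots> = - lam N (b, a) (2*N + 1 - j)"
      unfolding lam_def P_def[symmetric] M_def[symmetric] using j by (simp add: Suc_diff_le)
    finally show ?thesis .
  qed
  have pm: "sorted_list_of_multiset (image_mset uminus X) ! (j-1) = - (sorted_list_of_multiset X ! (N + 1 - j - 1))"
    if "size X = N" "j \<in> {1..N}" for X :: "real multiset" and j
    using idx_neg[of X N j] that by auto
  have part2: "even N \<longrightarrow> (\<forall>j\<in>{1..N}. lam_plus N (S_map N (b, a)) j = - lam_plus N (b, a) (N + 1 - j)
                          \<and> lam_minus N (S_map N (b, a)) j = - lam_minus N (b, a) (N + 1 - j))"
    using ev pm sP unfolding lam_plus_def lam_minus_def eigs_def PS_def[symmetric] MS_def[symmetric] P_def[symmetric] M_def[symmetric]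
    by auto
  have part3: "odd N \<longrightarrow> (\<forall>j\<in>{1..N}. lam_plus N (S_map N (b, a)) j = - lam_minus N (b, a) (N + 1 - j)
                          \<and> lam_minus N (S_map N (b, a)) j = - lam_plus N (b, a) (N + 1 - j))"
    using od pm sP unfolding lam_plus_def lam_minus_def eigs_def PS_def[symmetric] MS_def[symmetric] P_def[symmetric] M_def[symmetric]
    by auto
  have part4: "\<forall>k\<in>{1..N-1}. gap N (S_map N (b, a)) k = gap N (b, a) (N - k)"
  proof
    fix k assume k: "k \<in> {1..N-1}"
    have "gap N (S_map N (b, a)) k = - lam N (b, a) (2*N + 1 - (2*k+1)) + lam N (b, a) (2*N + 1 - 2*k)"
      unfolding gap_def using lamS[of "2*k+1"] lamS[of "2*k"] k by auto
    also have "2*N + 1 - (2*k+1) = 2 * (N-k)" using k by auto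
    also have "2*N + 1 - 2*k = 2 * (N-k) + 1" using k by auto
    finally show "gap N (S_map N (b, a)) k = gap N (b, a) (N - k)" unfolding gap_def by simp
  qed
  show ?thesis using lamS part2 part3 part4 by blast
qed


end
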